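(* For $t\in(0,1)$ and $n\ge0$, $y_n'(t)=t\,r_n'(t)$.
   Context: Fix $\alpha>0$, $\beta>0$, and real $A,B$ with $A\ge0$, $A+B\ge0$, not both zero; $\theta$ is the Heaviside step function. For $t\in(0,1)$ let $w(x;t)=x^\alpha(1-x)^\beta(A+B\theta(x-t))$ on $[0,1]$, and let $P_n(x)=P_n(x;t)=x^n+\mathsf p_1(n,t)x^{n-1}+\cdots$ be the monic orthogonal polynomials: $\int_0^1P_iP_jw\,dx=h_i(t)\delta_{ij}$, $h_i>0$. Define $r_n(t)=B\,t^\alpha(1-t)^\beta P_n(t;t)P_{n-1}(t;t)/h_{n-1}$ ($r_0=0$) and $y_n(t)=\frac{\beta}{h_{n-1}}\int_0^1\frac{P_n(y)P_{n-1}(y)}{1-y}\,y^\alpha(1-y)^\beta(A+B\theta(y-t))\,dy$ ($y_0=0$). A prime denotes $d/dt$. *)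

theory Defs
  imports "HOL-Analysis.Analysis" "HOL-Computational_Algebra.Polynomial"
begin

text \<open>Heaviside step function (value at 0 is irrelevant: a null set in all integrals).\<close>
definition heaviside :: "real \<Rightarrow> real" where
  "heaviside s = (if s \<ge> 0 then 1 else 0)"

definition wgt :: "real \<Rightarrow> real \<Rightarrow> real \<Rightarrow> real \<Rightarrow> real \<Rightarrow> real \<Rightarrow> real" where
  "wgt \<alpha> \<beta> A B t x = x powr \<alpha> * (1 - x) powr \<beta> * (A + B * heaviside (x - t))"

definition OP :: "real \<Rightarrow> real \<Rightarrow> real \<Rightarrow> real \<Rightarrow> real \<Rightarrow> nat \<Rightarrow> real poly" where
  "OP \<alpha> \<beta> A B t n = (THE p. degree p = n \<and> lead_coeff p = 1 \<and>
      (\<forall>q::real poly. degree q < n \<longrightarrow>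
         integral {0..1} (\<lambda>x. poly p x * poly q x * wgt \<alpha> \<beta> A B t x) = 0))"

definition hnorm :: "real \<Rightarrow> real \<Rightarrow> real \<Rightarrow> real \<Rightarrow> real \<Rightarrow> nat \<Rightarrow> real" where
  "hnorm \<alpha> \<beta> A B t n =
     integral {0..1} (\<lambda>x. (poly (OP \<alpha> \<beta> A B t n) x)\<^sup>2 * wgt \<alpha> \<beta> A B t x)"

definition r_aux :: "real \<Rightarrow> real \<Rightarrow> real \<Rightarrow> real \<Rightarrow> nat \<Rightarrow> real \<Rightarrow> real" where
  "r_aux \<alpha> \<beta> A B n t = (if n = 0 then 0 else
     B * t powr \<alpha> * (1 - t) powr \<beta> * poly (OP \<alpha> \<beta> A B t n) t
       * poly (OP \<alpha> \<beta> A B t (n - 1)) t / hnorm \<alpha> \<beta> A B t (n - 1))"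

definition y_aux :: "real \<Rightarrow> real \<Rightarrow> real \<Rightarrow> real \<Rightarrow> nat \<Rightarrow> real \<Rightarrow> real" where
  "y_aux \<alpha> \<beta> A B n t = (if n = 0 then 0 else
     \<beta> / hnorm \<alpha> \<beta> A B t (n - 1) *
       integral {0..1} (\<lambda>y. poly (OP \<alpha> \<beta> A B t n) y * poly (OP \<alpha> \<beta> A B t (n - 1)) y
                              / (1 - y) * wgt \<alpha> \<beta> A B t y))"

end

theory Submission imports Defs begin

locale ws =
  fixes al be A B :: real
  assumes al: "al > 0" and be: "be > 0" and A0: "A \<ge> 0" and AB: "A + B \<ge> 0"
    and nz: "\<not> (A = 0 \<and> B = 0)"
begin

definition w0 :: "real \<Rightarrow> real" where "w0 x = x powr al * (1 - x) powr be"

lemma wgt_eq: "wgt al be A B s x = w0 x * (A + B * heaviside (x - s))"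
  by (simp add: wgt_def w0_def)

lemma cont_w0: "continuous_on {0..1} w0"
  unfolding w0_def
  by (intro continuous_intros continuous_on_powr') (use al be in auto)

lemma w0_pos: "x \<in> {0<..<1} \<Longrightarrow> w0 x > 0"
  by (auto simp: w0_def)

lemma w0_nonneg: "w0 x \<ge> 0"
  by (auto simp: w0_def)

lemma HI:
  fixes f :: "real \<Rightarrow> real"
  assumes cf: "continuous_on {0..1} f" and s: "s \<in> {0..1}"
  shows "((\<lambda>x. f x * (A + B * heaviside (x - s))) has_integral
           (A * integral {0..1} f + B * integral {s..1} f)) {0..1}"
proof -
  have i01: "(f has_integral integral {0..1} f) {0..1}"
    using cf integrable_continuous_real by blast
  have cs1: "continuous_on {s..1} f" by (rule continuous_on_subset[OF cf]) (use s in auto)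
  have is1: "(f has_integral integral {s..1} f) {s..1}"
    using cs1 integrable_continuous_real by blast
  have h1: "((\<lambda>x. f x * heaviside (x - s)) has_integral 0) {0..s}"
    by (rule has_integral_spike_finite[of "{s}" _ _ "\<lambda>x. 0"]) (auto simp: heaviside_def)
  have h2: "((\<lambda>x. f x * heaviside (x - s)) has_integral integral {s..1} f) {s..1}"
    by (rule has_integral_eq[OF _ is1]) (auto simp: heaviside_def)
  have h: "((\<lambda>x. f x * heaviside (x - s)) has_integral integral {s..1} f) {0..1}"
    using has_integral_combine[OF _ _ h1 h2] s by auto
  have "((\<lambda>x. A * f x + B * (f x * heaviside (x - s))) has_integral
           (A * integral {0..1} f + B * integral {s..1} f)) {0..1}"
    by (intro has_integral_add has_integral_mult_right i01 h)
  then show ?thesis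
    by (rule has_integral_eq[rotated]) (simp add: algebra_simps)
qed

definition I :: "real poly \<Rightarrow> real \<Rightarrow> real" where
  "I p s = integral {0..1} (\<lambda>x. poly p x * wgt al be A B s x)"

lemma cont_pw: "continuous_on {0..1} (\<lambda>x. poly p x * w0 x)"
  by (intro continuous_intros cont_w0)

lemma I_has_integral:
  assumes "s \<in> {0..1}"
  shows "((\<lambda>x. poly p x * wgt al be A B s x) has_integral
     (A * integral {0..1} (\<lambda>x. poly p x * w0 x) + B * integral {s..1} (\<lambda>x. poly p x * w0 x))) {0..1}"
  using HI[OF cont_pw assms] by (simp add: wgt_eq mult.assoc)

lemma I_eq:
  assumes "s \<in> {0..1}"
  shows "I p s = A * integral {0..1} (\<lambda>x. poly p x * w0 x) + B * integral {s..1} (\<lambda>x. poly p x * w0 x)"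
  unfolding I_def using I_has_integral[OF assms] by (rule integral_unique)

lemma I_integrable: "s \<in> {0..1} \<Longrightarrow> (\<lambda>x. poly p x * wgt al be A B s x) integrable_on {0..1}"
  using I_has_integral by blast

lemma I_add: "s \<in> {0..1} \<Longrightarrow> I (p + q) s = I p s + I q s"
  unfolding I_def by (simp add: distrib_right integral_add I_integrable[of s p] I_integrable[of s q])

lemma I_diff: "s \<in> {0..1} \<Longrightarrow> I (p - q) s = I p s - I q s"
  unfolding I_def by (simp add: left_diff_distrib integral_diff I_integrable[of s p] I_integrable[of s q])

lemma I_smult: "I (smult c p) s = c * I p s"
  unfolding I_def by (simp add: mult.assoc)

lemma I_zero: "I 0 s = 0" by (simp add: I_def)

lemma I_sum: "s \<in> {0..1} \<Longrightarrow> I (\<Sum>j\<in>S. f j) s = (\<Sum>j\<in>S. I (f j) s)"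
  by (induction S rule: infinite_finite_induct) (auto simp: I_add I_zero)

lemma int_pos:
  assumes p: "p \<noteq> 0" and ab: "0 \<le> a" "a < b" "b \<le> 1"
  shows "integral {a..b} (\<lambda>x. poly (p * p) x * w0 x) > 0"
proof -
  have c: "continuous_on {a..b} (\<lambda>x. poly (p * p) x * w0 x)"
    by (rule continuous_on_subset[OF cont_pw]) (use ab in auto)
  have nn: "\<And>x. x \<in> {a..b} \<Longrightarrow> poly (p * p) x * w0 x \<ge> 0"
    by (simp add: w0_nonneg)
  have "finite {x. poly p x = 0}" using poly_roots_finite[OF p] .
  moreover have "infinite {a<..<b}" using ab by simp
  ultimately obtain x where x: "x \<in> {a<..<b}" "x \<notin> {x. poly p x = 0}"
    by (meson finite_subset subsetI)
  have "w0 x > 0" using x ab by (intro w0_pos) auto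
  moreover have "poly p x * poly p x > 0" using x by (auto simp: zero_less_mult_iff)
  ultimately have "poly (p * p) x * w0 x > 0" by simp
  then have "integral {a..b} (\<lambda>x. poly (p * p) x * w0 x) \<noteq> 0"
    using integral_eq_0_iff[OF c \<open>a < b\<close> nn] x by auto
  moreover have "integral {a..b} (\<lambda>x. poly (p * p) x * w0 x) \<ge> 0"
    by (intro integral_nonneg integrable_continuous_real c) (simp add: w0_nonneg)
  ultimately show ?thesis by linarith
qed

lemma I_sq_pos:
  assumes p: "p \<noteq> 0" and s: "s \<in> {0<..<1}"
  shows "I (p * p) s > 0"
proof -
  let ?g = "\<lambda>x. poly (p * p) x * w0 x"
  have "integral {0..s} ?g + integral {s..1} ?g = integral {0..1} ?g"
    using s Henstock_Kurzweil_Integration.integral_combine[where a=0 and c=s and b=1 and f="?g"] integrable_continuous_real[OF cont_pw, of "p*p"] by simp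
  then have "I (p * p) s = A * (integral {0..s} ?g + integral {s..1} ?g) + B * integral {s..1} ?g"
    using I_eq[of s "p*p"] s by simp
  then have e: "I (p * p) s = A * integral {0..s} ?g + (A + B) * integral {s..1} ?g"
    by (simp add: algebra_simps)
  have p1: "integral {0..s} ?g > 0" using int_pos[OF p, of 0 s] s by auto
  have p2: "integral {s..1} ?g > 0" using int_pos[OF p, of s 1] s by auto
  show ?thesis
  proof (cases "A = 0")
    case True
    then have "B > 0" using nz AB by auto
    then show ?thesis using e p2 True by simp
  next
    case False
    then have "A > 0" using A0 by simp
    then show ?thesis using e p1 p2 AB
      by (smt (verit) mult_nonneg_nonneg mult_pos_pos)
  qed
qed

lemma poly_sumN:
  fixes p :: "real poly"
  assumes "degree p \<le> N" shows "poly p x = (\<Sum>k\<le>N. coeff p k * x ^ k)"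
proof -
  have "(\<Sum>k\<le>degree p. coeff p k * x ^ k) = (\<Sum>k\<le>N. coeff p k * x ^ k)"
    by (rule sum.mono_neutral_left) (use assms in \<open>auto simp: coeff_eq_0\<close>)
  then show ?thesis by (simp add: poly_altdef)
qed

definition mom0 :: "nat \<Rightarrow> real" where "mom0 k = integral {0..1} (\<lambda>x. x ^ k * w0 x)"
definition momt :: "nat \<Rightarrow> real \<Rightarrow> real" where "momt k s = integral {s..1} (\<lambda>x. x ^ k * w0 x)"

lemma cont_mw: "continuous_on {0..1} (\<lambda>x. x ^ k * w0 x)"
  by (intro continuous_intros cont_w0)

lemma int_expand:
  assumes "degree p \<le> N" "0 \<le> a" "b \<le> 1"
  shows "integral {a..b} (\<lambda>x. poly p x * w0 x) = (\<Sum>k\<le>N. coeff p k * integral {a..b} (\<lambda>x. x ^ k * w0 x))"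
proof -
  have ci: "(\<lambda>x. x ^ k * w0 x) integrable_on {a..b}" for k
    by (rule integrable_continuous_real, rule continuous_on_subset[OF cont_mw]) (use assms in auto)
  have "integral {a..b} (\<lambda>x. poly p x * w0 x) = integral {a..b} (\<lambda>x. \<Sum>k\<le>N. coeff p k * (x ^ k * w0 x))"
    by (rule integral_cong) (simp add: poly_sumN[OF assms(1)] sum_distrib_right mult.assoc)
  also have "\<dots> = (\<Sum>k\<le>N. integral {a..b} (\<lambda>x. coeff p k * (x ^ k * w0 x)))"
    by (rule integral_sum) (auto intro: integrable_on_mult_right ci)
  also have "\<dots> = (\<Sum>k\<le>N. coeff p k * integral {a..b} (\<lambda>x. x ^ k * w0 x))"
    by simp
  finally show ?thesis .
qed

lemma I_expand:
  assumes "degree p \<le> N" "s \<in> {0..1}"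
  shows "I p s = (\<Sum>k\<le>N. coeff p k * (A * mom0 k + B * momt k s))"
  using assms
  by (simp add: I_eq int_expand[OF assms(1)] mom0_def momt_def sum_distrib_left sum.distrib algebra_simps)

lemma momt_deriv:
  assumes t: "t \<in> {0<..<1}"
  shows "((\<lambda>s. momt k s) has_real_derivative -(t ^ k * w0 t)) (at t)"
proof -
  let ?f = "\<lambda>x. x ^ k * w0 x"
  have d0: "((\<lambda>u. integral {0..u} ?f) has_vector_derivative ?f t) (at t within {0..1})"
    by (rule integral_has_vector_derivative[OF cont_mw]) (use t in auto)
  have eq: "at t within {0..1} = at t"
    by (rule at_within_interior) (use t in simp)
  have d: "((\<lambda>u. integral {0..u} ?f) has_real_derivative ?f t) (at t)"
    using d0 eq has_real_derivative_iff_has_vector_derivative by metis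
  have "((\<lambda>u. mom0 k - integral {0..u} ?f) has_real_derivative -(?f t)) (at t)"
    using DERIV_diff[OF DERIV_const d] by simp
  then show ?thesis
  proof (rule has_field_derivative_transform_within_open[where S="{0<..<1}"])
    show "open {0<..<1::real}" by simp
    show "t \<in> {0<..<1}" by fact
    fix s :: real assume s: "s \<in> {0<..<1}"
    have "integral {0..s} ?f + integral {s..1} ?f = integral {0..1} ?f"
      using s Henstock_Kurzweil_Integration.integral_combine[where a=0 and c=s and b=1 and f="?f"]
        integrable_continuous_real[OF cont_mw] by simp
    then show "mom0 k - integral {0..s} ?f = momt k s"
      by (simp add: mom0_def momt_def)
  qed
qed

definition pdiff :: "(real \<Rightarrow> real poly) \<Rightarrow> real \<Rightarrow> real poly \<Rightarrow> bool" where
  "pdiff F t D \<longleftrightarrow> (\<forall>k. ((\<lambda>s. coeff (F s) k) has_real_derivative coeff D k) (at t))"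

lemma pdiff_degree:
  assumes "pdiff F t D" "\<And>s. degree (F s) \<le> N"
  shows "degree D \<le> N"
proof (rule degree_le)
  show "\<forall>i>N. coeff D i = 0"
  proof (intro allI impI)
    fix i assume i: "N < i"
    have "((\<lambda>s. coeff (F s) i) has_real_derivative coeff D i) (at t)"
      using assms(1) by (simp add: pdiff_def)
    moreover have "(\<lambda>s. coeff (F s) i) = (\<lambda>s. 0)"
      using assms(2) i by (auto intro!: coeff_eq_0 ext dest: le_less_trans)
    ultimately have "((\<lambda>s. 0) has_real_derivative coeff D i) (at t)" by simp
    then show "coeff D i = 0"
      using DERIV_const DERIV_unique by blast
  qed
qed

lemma FD:
  assumes t: "t \<in> {0<..<1}" and pd: "pdiff F t D" and deg: "\<And>s. degree (F s) \<le> N"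
  shows "((\<lambda>s. I (F s) s) has_real_derivative (I D t - B * w0 t * poly (F t) t)) (at t)"
proof -
  have dD: "degree D \<le> N" by (rule pdiff_degree[OF pd deg])
  have cd: "((\<lambda>s. coeff (F s) k) has_real_derivative coeff D k) (at t)" for k
    using pd by (simp add: pdiff_def)
  have "((\<lambda>s. \<Sum>k\<le>N. coeff (F s) k * (A * mom0 k + B * momt k s)) has_real_derivative
     (\<Sum>k\<le>N. coeff D k * (A * mom0 k + B * momt k t) + coeff (F t) k * (B * -(t ^ k * w0 t)))) (at t)"
  proof (rule DERIV_sum)
    fix n assume "n \<in> {..N}"
    have "((\<lambda>s. A * mom0 n + B * momt n s) has_real_derivative 0 + B * -(t ^ n * w0 t)) (at t)"
      by (intro DERIV_add DERIV_const DERIV_cmult momt_deriv t)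
    from DERIV_mult[OF cd this]
    show "((\<lambda>s. coeff (F s) n * (A * mom0 n + B * momt n s)) has_real_derivative
      coeff D n * (A * mom0 n + B * momt n t) + coeff (F t) n * (B * - (t ^ n * w0 t))) (at t)"
      by (simp add: algebra_simps)
  qed
  also have "(\<Sum>k\<le>N. coeff D k * (A * mom0 k + B * momt k t) + coeff (F t) k * (B * -(t ^ k * w0 t)))
      = I D t - B * w0 t * poly (F t) t"
  proof -
    have e1: "I D t = (\<Sum>k\<le>N. coeff D k * (A * mom0 k + B * momt k t))"
      using t by (intro I_expand[OF dD]) auto
    have e2: "B * w0 t * poly (F t) t = (\<Sum>k\<le>N. B * w0 t * (coeff (F t) k * t ^ k))"
      unfolding poly_sumN[OF deg] sum_distrib_left ..
    show ?thesis unfolding e1 e2 sum_subtractf[symmetric]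
      by (rule sum.cong) (simp_all add: algebra_simps)
  qed
  finally have d: "((\<lambda>s. \<Sum>k\<le>N. coeff (F s) k * (A * mom0 k + B * momt k s)) has_real_derivative
      I D t - B * w0 t * poly (F t) t) (at t)" .
  show ?thesis
  proof (rule has_field_derivative_transform_within_open[OF d, where S="{0<..<1}"])
    fix s :: real assume "s \<in> {0<..<1}"
    then show "(\<Sum>k\<le>N. coeff (F s) k * (A * mom0 k + B * momt k s)) = I (F s) s"
      by (intro I_expand[OF deg, symmetric]) auto
  qed (use t in auto)
qed

lemma pdiff_const: "pdiff (\<lambda>s. p) t 0"
  by (simp add: pdiff_def)

lemma pdiff_add: "pdiff F t DF \<Longrightarrow> pdiff G t DG \<Longrightarrow> pdiff (\<lambda>s. F s + G s) t (DF + DG)"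
  unfolding pdiff_def by (auto intro: DERIV_add)

lemma pdiff_diff: "pdiff F t DF \<Longrightarrow> pdiff G t DG \<Longrightarrow> pdiff (\<lambda>s. F s - G s) t (DF - DG)"
  unfolding pdiff_def by (auto intro: DERIV_diff)

lemma pdiff_smult:
  assumes "(c has_real_derivative dc) (at t)" "pdiff F t DF"
  shows "pdiff (\<lambda>s. smult (c s) (F s)) t (smult dc (F t) + smult (c t) DF)"
  unfolding pdiff_def
proof
  fix k
  have "((\<lambda>s. c s * coeff (F s) k) has_real_derivative dc * coeff (F t) k + coeff DF k * c t) (at t)"
    by (rule DERIV_mult[OF assms(1)]) (use assms(2) in \<open>simp add: pdiff_def\<close>)
  then show "((\<lambda>s. coeff (smult (c s) (F s)) k) has_real_derivative
      coeff (smult dc (F t) + smult (c t) DF) k) (at t)"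
    by (simp add: algebra_simps)
qed

lemma pdiff_mult:
  assumes "pdiff F t DF" "pdiff G t DG"
  shows "pdiff (\<lambda>s. F s * G s) t (DF * G t + F t * DG)"
  unfolding pdiff_def
proof
  fix k
  have "((\<lambda>s. \<Sum>i\<le>k. coeff (F s) i * coeff (G s) (k - i)) has_real_derivative
      (\<Sum>i\<le>k. coeff DF i * coeff (G t) (k - i) + coeff (F t) i * coeff DG (k - i))) (at t)"
  proof (rule DERIV_sum)
    fix i
    have "((\<lambda>s. coeff (F s) i * coeff (G s) (k - i)) has_real_derivative
      coeff DF i * coeff (G t) (k - i) + coeff DG (k - i) * coeff (F t) i) (at t)"
      by (intro DERIV_mult) (use assms in \<open>auto simp: pdiff_def\<close>)
    then show "((\<lambda>s. coeff (F s) i * coeff (G s) (k - i)) has_real_derivative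
      coeff DF i * coeff (G t) (k - i) + coeff (F t) i * coeff DG (k - i)) (at t)"
      by (simp add: mult.commute)
  qed
  then show "((\<lambda>s. coeff (F s * G s) k) has_real_derivative coeff (DF * G t + F t * DG) k) (at t)"
    by (simp only: coeff_mult coeff_add sum.distrib)
qed

lemma pdiff_sum:
  assumes "\<And>j. j \<in> S \<Longrightarrow> pdiff (F j) t (DF j)"
  shows "pdiff (\<lambda>s. \<Sum>j\<in>S. F j s) t (\<Sum>j\<in>S. DF j)"
  unfolding pdiff_def
proof
  fix k
  have "((\<lambda>s. \<Sum>j\<in>S. coeff (F j s) k) has_real_derivative (\<Sum>j\<in>S. coeff (DF j) k)) (at t)"
    by (intro DERIV_sum) (use assms in \<open>auto simp: pdiff_def\<close>)
  then show "((\<lambda>s. coeff (\<Sum>j\<in>S. F j s) k) has_real_derivative coeff (\<Sum>j\<in>S. DF j) k) (at t)"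
    by (simp add: coeff_sum)
qed

lemma poly_self_deriv:
  assumes "pdiff F t D" "\<And>s. degree (F s) \<le> N"
  shows "\<exists>d. ((\<lambda>s. poly (F s) s) has_real_derivative d) (at t)"
proof -
  have cd: "((\<lambda>s. coeff (F s) k) has_real_derivative coeff D k) (at t)" for k
    using assms(1) by (simp add: pdiff_def)
  have "((\<lambda>s. \<Sum>k\<le>N. coeff (F s) k * s ^ k) has_real_derivative
     (\<Sum>k\<le>N. coeff D k * t ^ k + real k * (1 * t ^ (k - Suc 0)) * coeff (F t) k)) (at t)"
    by (intro DERIV_sum DERIV_mult cd DERIV_power DERIV_ident)
  then show ?thesis
    by (intro exI) (simp only: poly_sumN[OF assms(2)])
qed

fun GS :: "nat \<Rightarrow> real \<Rightarrow> real poly list" where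
  "GS 0 s = [1]"
| "GS (Suc n) s = GS n s @ [monom 1 (Suc n) -
     (\<Sum>j<Suc n. smult (I (monom 1 (Suc n) * GS n s ! j) s / I (GS n s ! j * GS n s ! j) s) (GS n s ! j))]"

definition Q :: "nat \<Rightarrow> real \<Rightarrow> real poly" where "Q n s = GS n s ! n"

definition cf :: "nat \<Rightarrow> nat \<Rightarrow> real \<Rightarrow> real" where
  "cf n j s = I (monom 1 n * Q j s) s / I (Q j s * Q j s) s"

lemma GS_len: "length (GS n s) = Suc n"
  by (induction n) auto

lemma GS_nth: "j \<le> n \<Longrightarrow> GS n s ! j = Q j s"
proof (induction n)
  case 0 then show ?case by (simp add: Q_def)
next
  case (Suc n)
  show ?case
  proof (cases "j = Suc n")
    case True then show ?thesis by (simp add: Q_def)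
  next
    case False
    then have "j \<le> n" using Suc.prems by simp
    then show ?thesis using Suc.IH by (simp add: nth_append GS_len)
  qed
qed

lemma Q_rec: "Q n s = monom 1 n - (\<Sum>j<n. smult (cf n j s) (Q j s))"
proof (cases n)
  case 0 then show ?thesis by (simp add: Q_def monom_0 one_pCons)
next
  case (Suc m)
  have "Q (Suc m) s = monom 1 (Suc m) -
     (\<Sum>j<Suc m. smult (I (monom 1 (Suc m) * GS m s ! j) s / I (GS m s ! j * GS m s ! j) s) (GS m s ! j))"
    by (simp add: Q_def nth_append GS_len)
  also have "\<dots> = monom 1 (Suc m) - (\<Sum>j<Suc m. smult (cf (Suc m) j s) (Q j s))"
    by (intro arg_cong2[where f="(-)"] refl sum.cong) (auto simp: GS_nth cf_def)
  finally show ?thesis using Suc by simp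
qed

lemma Q_coeff: "n \<le> k \<Longrightarrow> coeff (Q n s) k = (if k = n then 1 else 0)"
proof (induction n arbitrary: k rule: less_induct)
  case (less n)
  have "coeff (\<Sum>j<n. smult (cf n j s) (Q j s)) k = 0"
    using less by (auto simp: coeff_sum intro!: sum.neutral)
  then show ?case
    by (subst Q_rec) (auto simp: coeff_monom)
qed

lemma Q_degree: "degree (Q n s) = n" and Q_lead: "coeff (Q n s) n = 1"
proof -
  show c: "coeff (Q n s) n = 1" using Q_coeff[of n n s] by simp
  have "degree (Q n s) \<le> n" by (rule degree_le) (auto simp: Q_coeff)
  moreover have "n \<le> degree (Q n s)" by (rule le_degree) (simp add: c)
  ultimately show "degree (Q n s) = n" by simp
qed

lemma Q_nz: "Q n s \<noteq> 0"
  using Q_lead[of n s] by auto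

lemma I_comm: "I (p * q) s = I (q * p) s"
  by (simp add: mult.commute)

lemma Q_norm_pos: "s \<in> {0<..<1} \<Longrightarrow> I (Q j s * Q j s) s > 0"
  by (rule I_sq_pos[OF Q_nz])

lemma Q_orth_lt:
  assumes s: "s \<in> {0<..<1}"
  shows "j < n \<Longrightarrow> I (Q n s * Q j s) s = 0"
proof (induction n arbitrary: j rule: less_induct)
  case (less n)
  have s': "s \<in> {0..1}" using s by auto
  have orth: "I (Q i s * Q j s) s = 0" if "i < n" "i \<noteq> j" "j < n" for i
  proof (cases "j < i")
    case True then show ?thesis using less.IH[of i j] that by simp
  next
    case False then have "i < j" using that by simp
    then show ?thesis using less.IH[of j i] that less.prems by (simp add: I_comm)
  qed
  have "I (Q n s * Q j s) s = I (monom 1 n * Q j s) s - (\<Sum>i<n. cf n i s * I (Q i s * Q j s) s)"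
    by (subst Q_rec) (simp add: left_diff_distrib sum_distrib_right I_diff[OF s'] I_sum[OF s'] I_smult)
  also have "(\<Sum>i<n. cf n i s * I (Q i s * Q j s) s) = (\<Sum>i<n. if i = j then I (monom 1 n * Q j s) s else 0)"
  proof (rule sum.cong)
    fix i assume i: "i \<in> {..<n}"
    show "cf n i s * I (Q i s * Q j s) s = (if i = j then I (monom 1 n * Q j s) s else 0)"
      using orth[of i] i less.prems Q_norm_pos[OF s, of j] by (auto simp: cf_def)
  qed simp
  also have "\<dots> = I (monom 1 n * Q j s) s" using less.prems by simp
  finally show ?case by simp
qed

lemma Q_orth:
  assumes s: "s \<in> {0<..<1}" and ij: "i \<noteq> j"
  shows "I (Q i s * Q j s) s = 0"
  using Q_orth_lt[OF s, of i j] Q_orth_lt[OF s, of j i] ij by (cases "j < i") (auto simp: I_comm)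

lemma Q_orth_monom:
  assumes s: "s \<in> {0<..<1}" and k: "k < n"
  shows "I (Q n s * monom 1 k) s = 0"
proof -
  have s': "s \<in> {0..1}" using s by auto
  have "monom 1 k = Q k s + (\<Sum>j<k. smult (cf k j s) (Q j s))"
    by (subst Q_rec) simp
  then have "I (Q n s * monom 1 k) s = I (Q n s * Q k s) s + (\<Sum>j<k. cf k j s * I (Q n s * Q j s) s)"
    by (simp add: distrib_left sum_distrib_left I_add[OF s'] I_sum[OF s'] I_smult)
  also have "\<dots> = 0" using Q_orth[OF s] k by simp
  finally show ?thesis .
qed

lemma Q_orth_low:
  assumes s: "s \<in> {0<..<1}" and q: "\<And>k. n \<le> k \<Longrightarrow> coeff q k = 0"
  shows "I (Q n s * q) s = 0"
proof -
  have s': "s \<in> {0..1}" using s by auto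
  have qe0: "q = (\<Sum>k<n. monom (coeff q k) k)"
  proof (rule poly_eqI)
    fix i
    show "coeff q i = coeff (\<Sum>k<n. monom (coeff q k) k) i"
      using q[of i] by (auto simp: coeff_sum coeff_monom)
  qed
  have qe: "q = (\<Sum>k<n. smult (coeff q k) (monom 1 k))"
    by (subst qe0) (simp add: smult_monom)
  have "I (Q n s * q) s = (\<Sum>k<n. coeff q k * I (Q n s * monom 1 k) s)"
    by (subst qe) (simp add: sum_distrib_left I_sum[OF s'] I_smult)
  also have "\<dots> = 0" using Q_orth_monom[OF s] by simp
  finally show ?thesis .
qed

lemma Q_proj:
  assumes s: "s \<in> {0<..<1}" and R: "degree R \<le> m"
  shows "I (R * Q m s) s = coeff R m * I (Q m s * Q m s) s"
proof -
  have s': "s \<in> {0..1}" using s by auto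
  let ?d = "R - smult (coeff R m) (Q m s)"
  have "I (Q m s * ?d) s = 0"
    by (rule Q_orth_low[OF s]) (use R in \<open>auto simp: Q_coeff coeff_eq_0\<close>)
  then have "I (Q m s * R) s = coeff R m * I (Q m s * Q m s) s"
    by (simp add: right_diff_distrib I_diff[OF s'] I_smult mult.commute)
  then show ?thesis by (simp add: I_comm)
qed

lemma OP_eq:
  assumes s: "s \<in> {0<..<1}"
  shows "OP al be A B s n = Q n s"
  unfolding OP_def
proof (rule the_equality)
  have s': "s \<in> {0..1}" using s by auto
  show "degree (Q n s) = n \<and> lead_coeff (Q n s) = 1 \<and>
    (\<forall>q. degree q < n \<longrightarrow> integral {0..1} (\<lambda>x. poly (Q n s) x * poly q x * wgt al be A B s x) = 0)"
  proof (intro conjI allI impI)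
    show "degree (Q n s) = n" by (rule Q_degree)
    show "lead_coeff (Q n s) = 1" by (simp add: Q_degree Q_lead)
    fix q :: "real poly" assume "degree q < n"
    then have "I (Q n s * q) s = 0"
      by (intro Q_orth_low[OF s]) (auto intro: coeff_eq_0)
    then show "integral {0..1} (\<lambda>x. poly (Q n s) x * poly q x * wgt al be A B s x) = 0"
      by (simp add: I_def)
  qed
  fix p assume p: "degree p = n \<and> lead_coeff p = 1 \<and>
    (\<forall>q. degree q < n \<longrightarrow> integral {0..1} (\<lambda>x. poly p x * poly q x * wgt al be A B s x) = 0)"
  let ?d = "p - Q n s"
  have dc: "coeff ?d k = 0" if "n \<le> k" for k
    using p that by (cases "k = n") (auto simp: Q_coeff coeff_eq_0)
  show "p = Q n s"
  proof (rule ccontr)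
    assume ne: "p \<noteq> Q n s"
    then have dnz: "?d \<noteq> 0" by simp
    have "degree ?d < n"
    proof (rule ccontr)
      assume "\<not> degree ?d < n"
      then have "coeff ?d (degree ?d) = 0" using dc[of "degree ?d"] by linarith
      then show False using dnz leading_coeff_0_iff by blast
    qed
    then have "integral {0..1} (\<lambda>x. poly p x * poly ?d x * wgt al be A B s x) = 0"
      using p by blast
    then have "I (p * ?d) s = 0" by (simp only: I_def poly_mult)
    moreover have "I (Q n s * ?d) s = 0"
      by (rule Q_orth_low[OF s]) (use dc in auto)
    ultimately have "I (?d * ?d) s = 0"
      by (simp add: left_diff_distrib I_diff[OF s'])
    with I_sq_pos[OF dnz s] show False by simp
  qed
qed

lemma hnorm_eq:
  assumes s: "s \<in> {0<..<1}"
  shows "hnorm al be A B s n = I (Q n s * Q n s) s"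
  using OP_eq[OF s] by (simp add: hnorm_def I_def power2_eq_square)

lemma cf_deriv:
  assumes t: "t \<in> {0<..<1}" and pd: "pdiff (Q j) t D"
  shows "\<exists>dc. ((\<lambda>s. cf n j s) has_real_derivative dc) (at t)"
proof -
  have degN: "degree (monom 1 n * Q j s) \<le> n + j" for s
    using degree_mult_le[of "monom (1::real) n" "Q j s"] by (simp add: Q_degree degree_monom_eq)
  have degD: "degree (Q j s * Q j s) \<le> j + j" for s
    using degree_mult_le[of "Q j s" "Q j s"] by (simp add: Q_degree)
  have p1: "pdiff (\<lambda>s. monom 1 n * Q j s) t (0 * Q j t + monom 1 n * D)"
    by (rule pdiff_mult[OF pdiff_const pd])
  have p2: "pdiff (\<lambda>s. Q j s * Q j s) t (D * Q j t + Q j t * D)"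
    by (rule pdiff_mult[OF pd pd])
  note d1 = FD[OF t p1 degN]
  note d2 = FD[OF t p2 degD]
  have nz: "I (Q j t * Q j t) t \<noteq> 0" using Q_norm_pos[OF t, of j] by linarith
  show ?thesis
    unfolding cf_def using DERIV_divide[OF d1 d2 nz] by blast
qed

lemma Q_pdiff:
  assumes t: "t \<in> {0<..<1}"
  shows "\<exists>D. pdiff (Q n) t D"
proof (induction n rule: less_induct)
  case (less n)
  have "\<forall>j\<in>{..<n}. \<exists>p. pdiff (\<lambda>s. smult (cf n j s) (Q j s)) t p"
  proof
    fix j assume "j \<in> {..<n}"
    then obtain D where D: "pdiff (Q j) t D" using less by auto
    obtain dc where dc: "((\<lambda>s. cf n j s) has_real_derivative dc) (at t)"
      using cf_deriv[OF t D] by blast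
    show "\<exists>p. pdiff (\<lambda>s. smult (cf n j s) (Q j s)) t p"
      using pdiff_smult[OF dc D] by blast
  qed
  then obtain DS where DS: "\<forall>j\<in>{..<n}. pdiff (\<lambda>s. smult (cf n j s) (Q j s)) t (DS j)"
    by (metis bchoice)
  have "pdiff (\<lambda>s. monom 1 n - (\<Sum>j<n. smult (cf n j s) (Q j s))) t (0 - (\<Sum>j<n. DS j))"
    by (intro pdiff_diff pdiff_const pdiff_sum) (use DS in auto)
  moreover have "(\<lambda>s. monom 1 n - (\<Sum>j<n. smult (cf n j s) (Q j s))) = Q n"
    by (rule ext) (simp add: Q_rec[symmetric])
  ultimately show ?case by auto
qed

definition gg :: "real poly \<Rightarrow> real \<Rightarrow> real" where
  "gg P x = x powr (al + 1) * (1 - x) powr be * poly P x"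

definition gg' :: "real poly \<Rightarrow> real \<Rightarrow> real" where
  "gg' P x = (al + 1) * x powr al * (1 - x) powr be * poly P x
     + x powr (al + 1) * (1 - x) powr be * poly (pderiv P) x
     - be * x powr (al + 1) * (1 - x) powr (be - 1) * poly P x"

lemma gg_deriv:
  assumes x: "x \<in> {0<..<1}"
  shows "(gg P has_real_derivative gg' P x) (at x)"
proof -
  have d1: "((\<lambda>x. x powr (al + 1)) has_real_derivative (al + 1) * x powr al) (at x)"
    using has_real_derivative_powr[of x "al + 1"] x by simp
  have d2: "((\<lambda>x. (1 - x) powr be) has_real_derivative be * (1 - x) powr (be - 1) * (-1)) (at x)"
  proof -
    have "((\<lambda>x. 1 - x) has_real_derivative -1) (at x)"
      using DERIV_diff[OF DERIV_const[of 1] DERIV_ident] by simp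
    from DERIV_fun_powr[OF this, of be] x show ?thesis by simp
  qed
  have "(gg P has_real_derivative
      ((al + 1) * x powr al * (1 - x) powr be + be * (1 - x) powr (be - 1) * (-1) * x powr (al + 1)) * poly P x
      + poly (pderiv P) x * (x powr (al + 1) * (1 - x) powr be)) (at x)"
    unfolding gg_def by (intro DERIV_mult d1 d2 poly_DERIV)
  then show ?thesis by (simp add: gg'_def algebra_simps)
qed

lemma gg_cont: "continuous_on {0..1} (gg P)"
  unfolding gg_def
  by (intro continuous_intros continuous_on_powr') (use al be in auto)

lemma gg0: "gg P 0 = 0" and gg1: "gg P 1 = 0"
  using al be by (auto simp: gg_def)

lemma gg'_H_int:
  assumes s: "s \<in> {0<..<1}"
  shows "((\<lambda>x. gg' P x * (A + B * heaviside (x - s))) has_integral (- B * gg P s)) {0..1}"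
proof -
  have ftc1: "(gg' P has_integral (gg P s - gg P 0)) {0..s}"
    by (rule fundamental_theorem_of_calculus_interior)
       (use s in \<open>auto intro: continuous_on_subset[OF gg_cont] gg_deriv simp: has_real_derivative_iff_has_vector_derivative[symmetric]\<close>)
  have ftc2: "(gg' P has_integral (gg P 1 - gg P s)) {s..1}"
    by (rule fundamental_theorem_of_calculus_interior)
       (use s in \<open>auto intro: continuous_on_subset[OF gg_cont] gg_deriv simp: has_real_derivative_iff_has_vector_derivative[symmetric]\<close>)
  have h1: "((\<lambda>x. gg' P x * (A + B * heaviside (x - s))) has_integral A * gg P s) {0..s}"
  proof (rule has_integral_spike_finite[of "{s}"])
    show "((\<lambda>x. A * gg' P x) has_integral A * gg P s) {0..s}"
      using has_integral_mult_right[OF ftc1, of A] by (simp add: gg0)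
  qed (auto simp: heaviside_def)
  have h2: "((\<lambda>x. gg' P x * (A + B * heaviside (x - s))) has_integral (A + B) * (- gg P s)) {s..1}"
  proof (rule has_integral_eq[of _ "\<lambda>x. (A + B) * gg' P x"])
    show "((\<lambda>x. (A + B) * gg' P x) has_integral (A + B) * (- gg P s)) {s..1}"
      using has_integral_mult_right[OF ftc2, of "A + B"] by (simp add: gg1)
  qed (auto simp: heaviside_def algebra_simps)
  have "((\<lambda>x. gg' P x * (A + B * heaviside (x - s))) has_integral (A * gg P s + (A + B) * (- gg P s))) {0..1}"
    using has_integral_combine[OF _ _ h1 h2] s by auto
  then show ?thesis by (simp add: algebra_simps)
qed

lemma I_has: "s \<in> {0..1} \<Longrightarrow> ((\<lambda>x. poly p x * wgt al be A B s x) has_integral I p s) {0..1}"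
  unfolding I_def using I_integrable by (rule integrable_integral)

lemma pointwise_K:
  assumes x: "x \<in> {0<..<1}"
  shows "poly (pCons 0 P) x / (1 - x) * wgt al be A B s x =
    (poly (smult (al + 1) P + pCons 0 (pderiv P)) x * wgt al be A B s x - gg' P x * (A + B * heaviside (x - s))) / be"
proof -
  have x0: "x > 0" and x1: "1 - x > 0" using x by auto
  have p1: "x powr (al + 1) = x * x powr al" using x0 by (simp add: powr_add)
  have p2: "(1 - x) powr (be - 1) = (1 - x) powr be / (1 - x)" using x1 by (simp add: powr_diff)
  show ?thesis
    unfolding wgt_def gg'_def p1 p2 using x1 be
    by (simp add: field_simps)
qed

lemma Y_int:
  assumes s: "s \<in> {0<..<1}"
  shows "((\<lambda>x. poly P x / (1 - x) * wgt al be A B s x) has_integral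
     ((I (smult (al + 1) P + pCons 0 (pderiv P)) s + B * gg P s) / be + I P s)) {0..1}"
proof -
  let ?pp = "smult (al + 1) P + pCons 0 (pderiv P)"
  let ?H = "\<lambda>x. A + B * heaviside (x - s)"
  have s': "s \<in> {0..1}" using s by auto
  have "((\<lambda>x. (poly ?pp x * wgt al be A B s x - gg' P x * ?H x) / be) has_integral
      (I ?pp s + B * gg P s) / be) {0..1}"
    using has_integral_mult_right[OF has_integral_diff[OF I_has[OF s', of ?pp] gg'_H_int[OF s, of P]], of "1 / be"]
    by simp
  then have K: "((\<lambda>x. poly (pCons 0 P) x / (1 - x) * wgt al be A B s x) has_integral
      (I ?pp s + B * gg P s) / be) {0..1}"
  proof (rule has_integral_spike_finite[of "{0, 1}", rotated 2])
    fix x :: real assume "x \<in> {0..1} - {0, 1}"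
    then show "poly (pCons 0 P) x / (1 - x) * wgt al be A B s x =
      (poly ?pp x * wgt al be A B s x - gg' P x * ?H x) / be"
      by (intro pointwise_K) auto
  qed simp
  have "((\<lambda>x. poly (pCons 0 P) x / (1 - x) * wgt al be A B s x + poly P x * wgt al be A B s x) has_integral
      ((I ?pp s + B * gg P s) / be + I P s)) {0..1}"
    by (rule has_integral_add[OF K I_has[OF s']])
  then show ?thesis
  proof (rule has_integral_spike_finite[of "{1}", rotated 2])
    fix x :: real assume "x \<in> {0..1} - {1}"
    then have "1 - x \<noteq> 0" by auto
    then show "poly P x / (1 - x) * wgt al be A B s x =
      poly (pCons 0 P) x / (1 - x) * wgt al be A B s x + poly P x * wgt al be A B s x"
      by (simp add: field_simps)
  qed simp
qed

lemma xderiv_coeff: "coeff (pCons 0 (pderiv p)) k = of_nat k * coeff (p :: real poly) k"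
  by (cases k) (auto simp: coeff_pderiv)

lemma Ipp:
  assumes s: "s \<in> {0<..<1}" and n: "n \<ge> 1"
  shows "I (smult (al + 1) (Q n s * Q (n - 1) s) + pCons 0 (pderiv (Q n s * Q (n - 1) s))) s
       = - coeff (Q n s) (n - 1) * I (Q (n - 1) s * Q (n - 1) s) s"
proof -
  have s': "s \<in> {0..1}" using s by auto
  define F where "F = Q n s"
  define G where "G = Q (n - 1) s"
  have IP: "I (F * G) s = 0" unfolding F_def G_def using Q_orth[OF s, of n "n - 1"] n by simp
  have split: "pCons 0 (pderiv (F * G)) = pCons 0 (pderiv F) * G + F * pCons 0 (pderiv G)"
    by (rule poly_ext) (simp add: pderiv_mult algebra_simps)
  have I2: "I (F * pCons 0 (pderiv G)) s = 0"
    unfolding F_def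
  proof (rule Q_orth_low[OF s])
    fix k assume k: "n \<le> k"
    then show "coeff (pCons 0 (pderiv G)) k = 0"
      unfolding xderiv_coeff G_def using n by (simp add: Q_coeff)
  qed
  define R where "R = pCons 0 (pderiv F) - smult (of_nat n) F"
  have Rc: "coeff R k = (of_nat k - of_nat n) * coeff F k" for k
    by (simp add: R_def xderiv_coeff algebra_simps)
  have degR: "degree R \<le> n - 1"
  proof (rule degree_le, intro allI impI)
    fix k assume "n - 1 < k"
    then have "n \<le> k" by simp
    then show "coeff R k = 0" unfolding Rc F_def by (cases "k = n") (auto simp: Q_coeff)
  qed
  have "I (pCons 0 (pderiv F) * G) s = I (R * G) s + of_nat n * I (F * G) s"
    by (simp add: R_def algebra_simps I_add[OF s'] I_diff[OF s'] I_smult)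
  also have "I (R * G) s = coeff R (n - 1) * I (G * G) s"
    unfolding G_def by (rule Q_proj[OF s degR])
  also have "coeff R (n - 1) = - coeff F (n - 1)"
    unfolding Rc using n by (simp add: of_nat_diff)
  finally have I1: "I (pCons 0 (pderiv F) * G) s = - coeff F (n - 1) * I (G * G) s"
    using IP by simp
  show ?thesis
    unfolding F_def[symmetric] G_def[symmetric]
    by (simp only: I_add[OF s'] I_smult IP split I1 I2)
qed

lemma y_id:
  assumes s: "s \<in> {0<..<1}" and n: "n \<ge> 1"
  shows "y_aux al be A B n s = s * r_aux al be A B n s - coeff (Q n s) (n - 1)"
proof -
  define F where "F = Q n s"
  define G where "G = Q (n - 1) s"
  define h where "h = I (G * G) s"
  have hpos: "h > 0" unfolding h_def G_def by (rule Q_norm_pos[OF s])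
  have IP: "I (F * G) s = 0" unfolding F_def G_def using Q_orth[OF s, of n "n - 1"] n by simp
  have int: "integral {0..1} (\<lambda>y. poly F y * poly G y / (1 - y) * wgt al be A B s y)
     = (- coeff F (n - 1) * h + B * gg (F * G) s) / be"
  proof -
    have "integral {0..1} (\<lambda>y. poly F y * poly G y / (1 - y) * wgt al be A B s y)
        = (I (smult (al + 1) (F * G) + pCons 0 (pderiv (F * G))) s + B * gg (F * G) s) / be + I (F * G) s"
      using integral_unique[OF Y_int[OF s, of "F * G"]] by simp
    then show ?thesis
      using Ipp[OF s n] IP unfolding F_def G_def h_def by simp
  qed
  have "y_aux al be A B n s = be / h * integral {0..1} (\<lambda>y. poly F y * poly G y / (1 - y) * wgt al be A B s y)"
    using n unfolding y_aux_def OP_eq[OF s] hnorm_eq[OF s] F_def G_def h_def by simp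
  also have "\<dots> = be / h * ((- coeff F (n - 1) * h + B * gg (F * G) s) / be)"
    by (simp only: int)
  also have "\<dots> = - coeff F (n - 1) + B * gg (F * G) s / h"
    using hpos be by (simp add: field_simps)
  also have "gg (F * G) s = s * (s powr al * (1 - s) powr be * poly F s * poly G s)"
    using s by (simp add: gg_def powr_add)
  finally show ?thesis
    using n unfolding r_aux_def OP_eq[OF s] hnorm_eq[OF s] F_def[symmetric] G_def[symmetric] h_def[symmetric]
    by (simp add: field_simps)
qed

lemma pdiff_coeff_const:
  assumes "pdiff F t D" "\<And>s. coeff (F s) k = c"
  shows "coeff D k = 0"
proof -
  have "((\<lambda>s. coeff (F s) k) has_real_derivative coeff D k) (at t)"
    using assms(1) by (simp add: pdiff_def)
  then have "((\<lambda>s. c) has_real_derivative coeff D k) (at t)" using assms(2) by simp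
  then show ?thesis using DERIV_const DERIV_unique by blast
qed

lemma main:
  assumes t: "t \<in> {0<..<1}"
  shows "\<exists>D. (r_aux al be A B n has_real_derivative D) (at t) \<and>
             (y_aux al be A B n has_real_derivative t * D) (at t)"
proof (cases "n = 0")
  case True
  have r0: "r_aux al be A B n = (\<lambda>_. 0)" and y0: "y_aux al be A B n = (\<lambda>_. 0)"
    using True by (auto simp: r_aux_def y_aux_def)
  show ?thesis unfolding r0 y0 by (rule exI[of _ 0]) (simp add: DERIV_const)
next
  case False
  then have n: "n \<ge> 1" by simp
  obtain DF where DF: "pdiff (Q n) t DF" using Q_pdiff[OF t] by blast
  obtain DG where DG: "pdiff (Q (n - 1)) t DG" using Q_pdiff[OF t] by blast
  have degF: "\<And>s. degree (Q n s) \<le> n" and degG: "\<And>s. degree (Q (n - 1) s) \<le> n - 1"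
    by (simp_all add: Q_degree)
  have degGG: "degree (Q (n - 1) s * Q (n - 1) s) \<le> (n - 1) + (n - 1)" for s
    using degree_mult_le[of "Q (n - 1) s" "Q (n - 1) s"] by (simp add: Q_degree)
  have degFG: "degree (Q n s * Q (n - 1) s) \<le> n + (n - 1)" for s
    using degree_mult_le[of "Q n s" "Q (n - 1) s"] by (simp add: Q_degree)
  obtain a where da: "((\<lambda>s. poly (Q n s) s) has_real_derivative a) (at t)"
    using poly_self_deriv[OF DF degF] by blast
  obtain b where db: "((\<lambda>s. poly (Q (n - 1) s) s) has_real_derivative b) (at t)"
    using poly_self_deriv[OF DG degG] by blast
  note dh = FD[OF t pdiff_mult[OF DG DG] degGG]
  have hpos: "I (Q (n - 1) t * Q (n - 1) t) t > 0" by (rule Q_norm_pos[OF t])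
  have d1: "((\<lambda>s. s powr al) has_real_derivative al * t powr (al - 1)) (at t)"
    using has_real_derivative_powr[of t al] t by simp
  have d2: "((\<lambda>s. (1 - s) powr be) has_real_derivative be * (1 - t) powr (be - of_nat 1) * (-1)) (at t)"
  proof -
    have "((\<lambda>x. 1 - x) has_real_derivative -1) (at t)"
      using DERIV_diff[OF DERIV_const[of 1] DERIV_ident] by simp
    from DERIV_fun_powr[OF this, of be] t show ?thesis by simp
  qed
  define R where "R s = B * s powr al * (1 - s) powr be * poly (Q n s) s * poly (Q (n - 1) s) s
      / I (Q (n - 1) s * Q (n - 1) s) s" for s
  obtain D where dR: "(R has_real_derivative D) (at t)"
  proof -
    have "\<exists>D. ((\<lambda>s. B * s powr al * (1 - s) powr be * poly (Q n s) s * poly (Q (n - 1) s) s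
      / I (Q (n - 1) s * Q (n - 1) s) s) has_real_derivative D) (at t)"
      using DERIV_divide[OF DERIV_mult[OF DERIV_mult[OF DERIV_mult[OF DERIV_cmult[OF d1, of B] d2] da] db] dh]
        hpos by auto
    then show ?thesis using that unfolding R_def[abs_def] by blast
  qed
  have rR: "r_aux al be A B n s = R s" if "s \<in> {0<..<1}" for s
    using n unfolding r_aux_def R_def OP_eq[OF that] hnorm_eq[OF that] by simp
  have dr: "(r_aux al be A B n has_real_derivative D) (at t)"
    by (rule has_field_derivative_transform_within_open[OF dR, where S="{0<..<1}"])
       (use t rR in auto)
  have degDF: "degree DF \<le> n - 1"
  proof (rule degree_le, intro allI impI)
    fix k assume k: "n - 1 < k"
    show "coeff DF k = 0"
    proof (cases "k = n")
      case True
      then show ?thesis using pdiff_coeff_const[OF DF, of n 1] by (simp add: Q_lead)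
    next
      case False
      then have "n < k" using k by simp
      then show ?thesis using pdiff_degree[OF DF degF] by (simp add: coeff_eq_0)
    qed
  qed
  have degDG: "degree DG \<le> n - 1" by (rule pdiff_degree[OF DG degG])
  note dI = FD[OF t pdiff_mult[OF DF DG] degFG]
  have "((\<lambda>s. I (Q n s * Q (n - 1) s) s) has_real_derivative 0) (at t)"
  proof (rule has_field_derivative_transform_within_open[OF DERIV_const[of 0], where S="{0<..<1}"])
    fix s :: real assume "s \<in> {0<..<1}"
    then show "0 = I (Q n s * Q (n - 1) s) s" using Q_orth[of s n "n - 1"] n by simp
  qed (use t in auto)
  then have eq0: "I (DF * Q (n - 1) t + Q n t * DG) t - B * w0 t * poly (Q n t * Q (n - 1) t) t = 0"
    using dI DERIV_unique by blast
  have t': "t \<in> {0..1}" using t by auto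
  have i2: "I (Q n t * DG) t = 0"
    by (rule Q_orth_low[OF t]) (use degDG n in \<open>auto intro: coeff_eq_0\<close>)
  have i1: "I (DF * Q (n - 1) t) t = coeff DF (n - 1) * I (Q (n - 1) t * Q (n - 1) t) t"
    by (rule Q_proj[OF t degDF])
  have key: "coeff DF (n - 1) = r_aux al be A B n t"
  proof -
    have "coeff DF (n - 1) * I (Q (n - 1) t * Q (n - 1) t) t = B * w0 t * (poly (Q n t) t * poly (Q (n - 1) t) t)"
      using eq0 i1 i2 by (simp add: I_add[OF t'])
    moreover have "r_aux al be A B n t * I (Q (n - 1) t * Q (n - 1) t) t
        = B * w0 t * (poly (Q n t) t * poly (Q (n - 1) t) t)"
      using hpos rR[OF t] unfolding R_def w0_def by (simp add: field_simps)
    ultimately show ?thesis using hpos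
      by (metis less_irrefl mult_right_cancel)
  qed
  have dp: "((\<lambda>s. coeff (Q n s) (n - 1)) has_real_derivative coeff DF (n - 1)) (at t)"
    using DF by (simp add: pdiff_def)
  have "((\<lambda>s. s * r_aux al be A B n s - coeff (Q n s) (n - 1)) has_real_derivative
      (1 * r_aux al be A B n t + D * t) - coeff DF (n - 1)) (at t)"
    by (intro DERIV_diff DERIV_mult DERIV_ident dr dp)
  then have "((\<lambda>s. s * r_aux al be A B n s - coeff (Q n s) (n - 1)) has_real_derivative t * D) (at t)"
    using key by (simp add: mult.commute)
  then have dy: "(y_aux al be A B n has_real_derivative t * D) (at t)"
  proof (rule has_field_derivative_transform_within_open[where S="{0<..<1}"])
    fix s :: real assume "s \<in> {0<..<1}"
    then show "s * r_aux al be A B n s - coeff (Q n s) (n - 1) = y_aux al be A B n s"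
      using y_id n by simp
  qed (use t in auto)
  show ?thesis using dr dy by blast
qed

end

theorem lemma3p2:
  fixes \<alpha> \<beta> A B t :: real and n :: nat
  assumes "\<alpha> > 0" and "\<beta> > 0" and "A \<ge> 0" and "A + B \<ge> 0" and "\<not> (A = 0 \<and> B = 0)"
    and "t \<in> {0<..<1}"
  shows "\<exists>D. (r_aux \<alpha> \<beta> A B n has_real_derivative D) (at t) \<and>
             (y_aux \<alpha> \<beta> A B n has_real_derivative t * D) (at t)"
proof -
  interpret ws \<alpha> \<beta> A B using assms by unfold_locales auto
  show ?thesis by (rule main[OF assms(6)])
qed

end
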